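(* For every integer $g\geq 3$ there exist a graph $G$ with girth $g$ and an $N\in\mathbb{N}$ such that $P_{DP}(G,m)<P(G,m)$ for every integer $m\geq N$.
   Context: All graphs are finite and simple. $P(G,m)$ denotes the chromatic polynomial of $G$. A cover of a graph $G$ is a pair $\mathcal{H}=(L,H)$ where $H$ is a graph and $L:V(G)\to\mathcal{P}(V(H))$ satisfies: (1) the sets $L(u)$, $u\in V(G)$, partition $V(H)$; (2) for every $u$, $H[L(u)]$ is complete; (3) if $E_H(L(u),L(v))\neq\emptyset$ then $u=v$ or $uv\in E(G)$; (4) if $uv\in E(G)$ then $E_H(L(u),L(v))$ is a matching (possibly empty). Here $E_H(S,U)$ is the set of edges of $H$ between $S$ and $U$. The cover is $m$-fold if $|L(u)|=m$ for all $u$. An $\mathcal{H}$-coloring is an independent set of $H$ of size $|V(G)|$. $P_{DP}(G,\mathcal{H})$ is the number of $\mathcal{H}$-colorings, and $P_{DP}(G,m)$ is the minimum of $P_{DP}(G,\mathcal{H})$ over all $m$-fold covers $\mathcal{H}$ of $G$. *)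

theory Defs
  imports Main "HOL-Library.FuncSet" "HOL-Library.Extended_Nat"
begin

definition simple_graph :: "'a set \<Rightarrow> 'a set set \<Rightarrow> bool" where
  "simple_graph V E \<longleftrightarrow> finite V \<and>
     (\<forall>e\<in>E. \<exists>u v. e = {u, v} \<and> u \<noteq> v \<and> u \<in> V \<and> v \<in> V)"

definition chrom_poly :: "'a set \<Rightarrow> 'a set set \<Rightarrow> nat \<Rightarrow> nat" where
  "chrom_poly V E m = card {f \<in> V \<rightarrow>\<^sub>E {..<m}. \<forall>u v. {u, v} \<in> E \<longrightarrow> f u \<noteq> f v}"

definition has_cycle_len :: "'a set \<Rightarrow> 'a set set \<Rightarrow> nat \<Rightarrow> bool" where
  "has_cycle_len V E k \<longleftrightarrow> k \<ge> 3 \<and> (\<exists>vs. length vs = k \<and> distinct vs \<and> set vs \<subseteq> V \<and>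
     (\<forall>i<k. {vs ! i, vs ! ((i + 1) mod k)} \<in> E))"

text \<open>Girth: length of a shortest cycle (infinity for forests).\<close>
definition girth :: "'a set \<Rightarrow> 'a set set \<Rightarrow> enat" where
  "girth V E = (INF k\<in>{k. has_cycle_len V E k}. enat k)"

definition is_cover :: "'a set \<Rightarrow> 'a set set \<Rightarrow> ('a \<Rightarrow> 'b set) \<Rightarrow> 'b set \<Rightarrow> 'b set set \<Rightarrow> bool" where
  "is_cover V E L VH EH \<longleftrightarrow>
     simple_graph VH EH \<and>
     (\<Union>u\<in>V. L u) = VH \<and>
     (\<forall>u\<in>V. \<forall>v\<in>V. u \<noteq> v \<longrightarrow> L u \<inter> L v = {}) \<and>
     (\<forall>u\<in>V. \<forall>x\<in>L u. \<forall>y\<in>L u. x \<noteq> y \<longrightarrow> {x, y} \<in> EH) \<and>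
     (\<forall>u\<in>V. \<forall>v\<in>V. \<forall>x\<in>L u. \<forall>y\<in>L v. {x, y} \<in> EH \<longrightarrow> u = v \<or> {u, v} \<in> E) \<and>
     (\<forall>u v. {u, v} \<in> E \<longrightarrow>
        (\<forall>x\<in>L u. \<forall>y\<in>L v. \<forall>y'\<in>L v. {x, y} \<in> EH \<and> {x, y'} \<in> EH \<longrightarrow> y = y') \<and>
        (\<forall>y\<in>L v. \<forall>x\<in>L u. \<forall>x'\<in>L u. {x, y} \<in> EH \<and> {x', y} \<in> EH \<longrightarrow> x = x'))"

definition is_mfold_cover :: "'a set \<Rightarrow> 'a set set \<Rightarrow> nat \<Rightarrow> ('a \<Rightarrow> 'b set) \<Rightarrow> 'b set \<Rightarrow> 'b set set \<Rightarrow> bool" where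
  "is_mfold_cover V E m L VH EH \<longleftrightarrow> is_cover V E L VH EH \<and> (\<forall>u\<in>V. card (L u) = m)"

text \<open>Number of H-colourings: independent sets of H of size |V(G)|.\<close>
definition dp_count :: "'a set \<Rightarrow> 'b set \<Rightarrow> 'b set set \<Rightarrow> nat" where
  "dp_count V VH EH = card {I. I \<subseteq> VH \<and> (\<forall>x\<in>I. \<forall>y\<in>I. {x, y} \<notin> EH) \<and> card I = card V}"

text \<open>DP colour function: minimum over all m-fold covers (cover vertices taken in nat;
every finite cover is isomorphic to one on nat).\<close>
definition dp_chrom :: "'a set \<Rightarrow> 'a set set \<Rightarrow> nat \<Rightarrow> nat" where
  "dp_chrom V E m = Inf {dp_count V VH EH | L VH (EH :: nat set set).
       is_mfold_cover V E m L VH EH}"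

end

theory Submission
  imports Defs "HOL-Library.Nat_Bijection"
begin


definition PS :: "nat \<Rightarrow> nat \<Rightarrow> nat \<Rightarrow> nat \<Rightarrow> (nat \<Rightarrow> nat) set" where
  "PS m k a b = {f \<in> {..<Suc k} \<rightarrow>\<^sub>E {..<m}. f 0 = a \<and> f k = b \<and> (\<forall>i<k. f i \<noteq> f (Suc i))}"

definition NN :: "nat \<Rightarrow> nat \<Rightarrow> nat \<Rightarrow> nat \<Rightarrow> nat" where
  "NN m k a b = card (PS m k a b)"

lemma finite_PS: "finite (PS m k a b)"
proof -
  have "PS m k a b \<subseteq> {..<Suc k} \<rightarrow>\<^sub>E {..<m}" unfolding PS_def by auto
  moreover have "finite ({..<Suc k} \<rightarrow>\<^sub>E {..<m})" by (rule finite_PiE) auto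
  ultimately show ?thesis by (rule finite_subset)
qed

lemma PS_Suc:
  assumes "b < m"
  shows "PS m (Suc k) a b = (\<Union>c\<in>{..<m} - {b}. (\<lambda>f. f(Suc (Suc k) - 1 := b)) ` PS m k a c)"
proof (intro equalityI subsetI)
  fix f assume f: "f \<in> PS m (Suc k) a b"
  define f' where "f' = f(Suc k := undefined)"
  have ins: "{..<Suc (Suc k)} = insert (Suc k) {..<Suc k}" by auto
  have "f' \<in> {..<Suc k} \<rightarrow>\<^sub>E {..<m}" unfolding f'_def
    using f unfolding PS_def ins by (intro fun_upd_in_PiE) auto
  moreover have "f' 0 = a" "f' k = f k" "\<forall>i<k. f' i \<noteq> f' (Suc i)"
    using f unfolding PS_def f'_def by auto
  ultimately have "f' \<in> PS m k a (f k)" unfolding PS_def by auto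
  moreover have "f k \<in> {..<m} - {b}" using f unfolding PS_def by auto
  moreover have "f = f'(Suc (Suc k) - 1 := b)" using f unfolding PS_def f'_def by auto
  ultimately show "f \<in> (\<Union>c\<in>{..<m} - {b}. (\<lambda>f. f(Suc (Suc k) - 1 := b)) ` PS m k a c)" by blast
next
  fix f assume "f \<in> (\<Union>c\<in>{..<m} - {b}. (\<lambda>f. f(Suc (Suc k) - 1 := b)) ` PS m k a c)"
  then obtain c h where c: "c < m" "c \<noteq> b" and h: "h \<in> PS m k a c" and fh: "f = h(Suc k := b)" by auto
  have ins: "{..<Suc (Suc k)} = insert (Suc k) {..<Suc k}" by auto
  have "f \<in> {..<Suc (Suc k)} \<rightarrow>\<^sub>E {..<m}" unfolding fh ins
    using h assms unfolding PS_def by (intro PiE_fun_upd) auto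
  moreover have "\<forall>i<Suc k. f i \<noteq> f (Suc i)"
  proof (intro allI impI)
    fix i assume "i < Suc k"
    then consider "i < k" | "i = k" by linarith
    then show "f i \<noteq> f (Suc i)"
      by cases (use h c in \<open>auto simp: fh PS_def\<close>)
  qed
  ultimately show "f \<in> PS m (Suc k) a b" using h unfolding PS_def fh by auto
qed

lemma NN_Suc:
  assumes "b < m"
  shows "NN m (Suc k) a b = (\<Sum>c\<in>{..<m} - {b}. NN m k a c)"
proof -
  have "NN m (Suc k) a b = card (\<Union>c\<in>{..<m} - {b}. (\<lambda>f. f(Suc (Suc k) - 1 := b)) ` PS m k a c)"
    unfolding NN_def PS_Suc[OF assms] ..
  also have "\<dots> = (\<Sum>c\<in>{..<m} - {b}. card ((\<lambda>f. f(Suc (Suc k) - 1 := b)) ` PS m k a c))"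
  proof (rule card_UN_disjoint)
    show "\<forall>i\<in>{..<m} - {b}. \<forall>j\<in>{..<m} - {b}. i \<noteq> j \<longrightarrow>
      (\<lambda>f. f(Suc (Suc k) - 1 := b)) ` PS m k a i \<inter> (\<lambda>f. f(Suc (Suc k) - 1 := b)) ` PS m k a j = {}"
    proof (intro ballI impI)
      fix i j :: nat assume "i \<noteq> j"
      show "(\<lambda>f. f(Suc (Suc k) - 1 := b)) ` PS m k a i \<inter> (\<lambda>f. f(Suc (Suc k) - 1 := b)) ` PS m k a j = {}"
      proof (rule ccontr)
        assume "\<not> ?thesis"
        then obtain f1 f2 where "f1 \<in> PS m k a i" "f2 \<in> PS m k a j" "f1(Suc k := b) = f2(Suc k := b)" by auto
        moreover have "(f1(Suc k := b)) k = f1 k" "(f2(Suc k := b)) k = f2 k" by auto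
        ultimately show False using \<open>i \<noteq> j\<close> unfolding PS_def by (metis (mono_tags, lifting) mem_Collect_eq)
      qed
    qed
  qed (auto intro: finite_PS)
  also have "\<dots> = (\<Sum>c\<in>{..<m} - {b}. NN m k a c)"
  proof (rule sum.cong[OF refl])
    fix c
    have "inj_on (\<lambda>f. f(Suc (Suc k) - 1 := b)) (PS m k a c)"
    proof (rule inj_onI)
      fix f1 f2 assume f1: "f1 \<in> PS m k a c" and f2: "f2 \<in> PS m k a c"
        and eq: "f1(Suc (Suc k) - 1 := b) = f2(Suc (Suc k) - 1 := b)"
      show "f1 = f2"
      proof (rule PiE_ext)
        show "f1 \<in> {..<Suc k} \<rightarrow>\<^sub>E {..<m}" "f2 \<in> {..<Suc k} \<rightarrow>\<^sub>E {..<m}"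
          using f1 f2 unfolding PS_def by auto
        fix i assume "i \<in> {..<Suc k}"
        then show "f1 i = f2 i" using fun_cong[OF eq, of i] by auto
      qed
    qed
    then show "card ((\<lambda>f. f(Suc (Suc k) - 1 := b)) ` PS m k a c) = NN m k a c"
      unfolding NN_def by (rule card_image)
  qed
  finally show ?thesis .
qed

definition TT :: "nat \<Rightarrow> nat \<Rightarrow> nat \<Rightarrow> nat" where
  "TT m k a = (\<Sum>c<m. NN m k a c)"

lemma NN_Suc': "b < m \<Longrightarrow> NN m (Suc k) a b + NN m k a b = TT m k a"
  unfolding TT_def NN_Suc
  by (metis add.commute finite_lessThan lessThan_iff sum.remove)

lemma NN_0: "a < m \<Longrightarrow> NN m 0 a b = (if a = b then 1 else 0)"
proof -
  assume a: "a < m"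
  have "PS m 0 a b = (if a = b then {\<lambda>i::nat. if i = 0 then a else undefined} else {})"
  proof (cases "a = b")
    case True
    have "PS m 0 a b = {\<lambda>i::nat. if i = 0 then a else undefined}"
    proof (intro equalityI subsetI)
      fix f assume f: "f \<in> PS m 0 a b"
      then have "f \<in> {..<Suc 0} \<rightarrow>\<^sub>E {..<m}" "f 0 = a" unfolding PS_def by auto
      then show "f \<in> {\<lambda>i::nat. if i = 0 then a else undefined}"
        by (auto simp: PiE_def extensional_def)
    next
      fix f assume "f \<in> {\<lambda>i::nat. if i = 0 then a else undefined}"
      then show "f \<in> PS m 0 a b" using a True unfolding PS_def by (auto simp: PiE_iff extensional_def split: if_splits)
    qed
    then show ?thesis using True by simp
  next
    case False then show ?thesis unfolding PS_def by auto
  qed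
  then show ?thesis unfolding NN_def by auto
qed

lemma NN_diff:
  assumes "a < m" "b < m" "a \<noteq> b"
  shows "int (NN m k a a) - int (NN m k a b) = (-1) ^ k"
proof (induction k)
  case 0 then show ?case using assms by (simp add: NN_0)
next
  case (Suc k)
  have 1: "NN m (Suc k) a a + NN m k a a = TT m k a" using assms by (intro NN_Suc')
  have 2: "NN m (Suc k) a b + NN m k a b = TT m k a" using assms by (intro NN_Suc')
  from 1 2 Suc show ?case by simp
qed

definition Cyc :: "nat \<Rightarrow> nat \<Rightarrow> (nat \<Rightarrow> nat \<Rightarrow> bool) \<Rightarrow> (nat \<Rightarrow> nat) set" where
  "Cyc m k Q = {f \<in> {..<Suc k} \<rightarrow>\<^sub>E {..<m}. (\<forall>i<k. f i \<noteq> f (Suc i)) \<and> Q (f 0) (f k)}"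

lemma card_Cyc: "card (Cyc m k Q) = (\<Sum>a<m. \<Sum>b<m. if Q a b then NN m k a b else 0)"
proof -
  have eq: "Cyc m k Q = (\<Union>a\<in>{..<m}. \<Union>b\<in>{b\<in>{..<m}. Q a b}. PS m k a b)"
    unfolding Cyc_def PS_def by (auto simp: PiE_iff)
  have "card (\<Union>a\<in>{..<m}. \<Union>b\<in>{b\<in>{..<m}. Q a b}. PS m k a b)
      = (\<Sum>a<m. card (\<Union>b\<in>{b\<in>{..<m}. Q a b}. PS m k a b))"
    by (rule card_UN_disjoint) (auto simp: PS_def intro: finite_PS[unfolded PS_def])
  also have "\<dots> = (\<Sum>a<m. \<Sum>b\<in>{b\<in>{..<m}. Q a b}. NN m k a b)"
  proof (rule sum.cong[OF refl])
    fix a show "card (\<Union>b\<in>{b\<in>{..<m}. Q a b}. PS m k a b) = (\<Sum>b\<in>{b\<in>{..<m}. Q a b}. NN m k a b)"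
      unfolding NN_def by (rule card_UN_disjoint) (auto simp: PS_def intro: finite_PS[unfolded PS_def])
  qed
  also have "\<dots> = (\<Sum>a<m. \<Sum>b<m. if Q a b then NN m k a b else 0)"
    by (rule sum.cong[OF refl], rule sum.inter_filter) simp
  finally show ?thesis using eq by simp
qed

lemma sum_if_split:
  fixes N :: "nat \<Rightarrow> nat"
  assumes "c < m" "\<And>b. b < m \<Longrightarrow> P b \<longleftrightarrow> b \<noteq> c"
  shows "(\<Sum>b<m. if P b then N b else 0) + N c = (\<Sum>b<m. N b)"
proof -
  have "(\<Sum>b<m. N b) = (\<Sum>b<m. (if P b then N b else 0) + (if b = c then N b else 0))"
    by (rule sum.cong) (use assms in auto)
  also have "\<dots> = (\<Sum>b<m. if P b then N b else 0) + N c"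
    using assms(1) by (simp add: sum.distrib)
  finally show ?thesis by simp
qed

definition tw :: "nat \<Rightarrow> nat \<Rightarrow> nat \<Rightarrow> bool" where
  "tw m a b \<longleftrightarrow> a \<noteq> Suc b mod m"

lemma tw_iff: "a < m \<Longrightarrow> b < m \<Longrightarrow> tw m a b \<longleftrightarrow> b \<noteq> (if a = 0 then m - 1 else a - 1)"
  unfolding tw_def
  by (cases "Suc b = m") (auto simp: mod_if)

lemma Cyc_compare:
  assumes "odd k" "m \<ge> 2"
  shows "card (Cyc m k (\<lambda>a b. a \<noteq> b)) = card (Cyc m k (tw m)) + m"
proof -
  have "card (Cyc m k (\<lambda>a b. a \<noteq> b)) = (\<Sum>a<m. \<Sum>b<m. if a \<noteq> b then NN m k a b else 0)"
    by (rule card_Cyc)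
  also have "\<dots> = (\<Sum>a<m. (\<Sum>b<m. if tw m a b then NN m k a b else 0) + 1)"
  proof (rule sum.cong[OF refl])
    fix a assume a: "a \<in> {..<m}"
    define p where "p = (if a = 0 then m - 1 else a - 1)"
    have p: "p < m" "p \<noteq> a" using a assms unfolding p_def by auto
    have d: "int (NN m k a a) - int (NN m k a p) = -1"
      using NN_diff[of a m p k] a p assms by simp
    have 1: "(\<Sum>b<m. if a \<noteq> b then NN m k a b else 0) + NN m k a a = (\<Sum>b<m. NN m k a b)"
      using a by (intro sum_if_split) auto
    have 2: "(\<Sum>b<m. if tw m a b then NN m k a b else 0) + NN m k a p = (\<Sum>b<m. NN m k a b)"
      using a p by (intro sum_if_split) (auto simp: tw_iff p_def)
    show "(\<Sum>b<m. if a \<noteq> b then NN m k a b else 0) = (\<Sum>b<m. if tw m a b then NN m k a b else 0) + 1"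
      using 1 2 d by linarith
  qed
  also have "\<dots> = card (Cyc m k (tw m)) + m"
    by (simp add: sum.distrib card_Cyc del: add_Suc_right add_Suc)
  finally show ?thesis .
qed



definition sc :: "nat \<Rightarrow> nat \<Rightarrow> nat" where
  "sc g i = (if i < 2*g then Suc i mod (2*g) else 2*g + (Suc i - 2*g) mod g)"

definition GV :: "nat \<Rightarrow> nat set" where "GV g = {..<3*g}"
definition GE :: "nat \<Rightarrow> nat set set" where "GE g = {{i, sc g i} | i. i < 3*g}"

lemma sc_lt: "g \<ge> 3 \<Longrightarrow> i < 3*g \<Longrightarrow> sc g i < 3*g"
  unfolding sc_def by (auto simp: mod_if)

lemma sc_low: "i < 2*g \<Longrightarrow> sc g i < 2*g"
  unfolding sc_def by auto

lemma sc_high: "g \<ge> 3 \<Longrightarrow> 2*g \<le> i \<Longrightarrow> i < 3*g \<Longrightarrow> 2*g \<le> sc g i \<and> sc g i < 3*g"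
  unfolding sc_def by (auto simp: mod_if)

lemma sc_pow_low: "v < 2*g \<Longrightarrow> (sc g ^^ j) v = (v + j) mod (2*g)"
proof (induction j)
  case 0 then show ?case by simp
next
  case (Suc j)
  have "(v + j) mod (2*g) < 2*g" using Suc by auto
  then show ?case using Suc by (simp add: sc_def mod_Suc_eq)
qed

lemma sc_pow_high: "g \<ge> 3 \<Longrightarrow> 2*g \<le> v \<Longrightarrow> v < 3*g \<Longrightarrow> (sc g ^^ j) v = 2*g + (v - 2*g + j) mod g"
proof (induction j)
  case 0 then show ?case by simp
next
  case (Suc j)
  have "\<not> (2*g + (v - 2*g + j) mod g < 2*g)" by simp
  then have "sc g (2*g + (v - 2*g + j) mod g) = 2*g + (Suc ((v - 2*g + j) mod g)) mod g"
    unfolding sc_def by simp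
  then show ?case using Suc by (simp add: mod_Suc_eq)
qed

lemma sc_pow_ne: assumes "g \<ge> 3" "v < 3*g" "0 < j" "j < g" shows "(sc g ^^ j) v \<noteq> v"
proof (cases "v < 2*g")
  case True
  show ?thesis
  proof (cases "v + j < 2*g")
    case True2: True
    then show ?thesis using sc_pow_low[OF True, of j] assms by simp
  next
    case False
    then have "(v + j) mod (2*g) = v + j - 2*g" using assms True
      by (simp add: le_mod_geq)
    then show ?thesis using sc_pow_low[OF True, of j] assms False by simp
  qed
next
  case False
  show ?thesis
  proof (cases "v - 2*g + j < g")
    case True2: True
    then show ?thesis using sc_pow_high[of g v j] assms False by simp
  next
    case F2: False
    then have "(v - 2*g + j) mod g = v - 2*g + j - g" using assms False
      by (simp add: le_mod_geq)
    then show ?thesis using sc_pow_high[of g v j] assms False F2 by simp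
  qed
qed

lemma sc_inj: "g \<ge> 3 \<Longrightarrow> i < 3*g \<Longrightarrow> j < 3*g \<Longrightarrow> sc g i = sc g j \<Longrightarrow> i = j"
  unfolding sc_def by (auto simp: mod_if split: if_splits)

lemma sc_ne: "g \<ge> 3 \<Longrightarrow> i < 3*g \<Longrightarrow> sc g i \<noteq> i"
  unfolding sc_def by (auto simp: mod_if split: if_splits)

lemma sc_sc_ne: "g \<ge> 3 \<Longrightarrow> i < 3*g \<Longrightarrow> sc g (sc g i) \<noteq> i"
  unfolding sc_def by (auto simp: mod_if split: if_splits)

lemma GE_adj:
  assumes that: "g \<ge> 3" and "{x, y} \<in> GE g" shows "x < 3*g \<and> y < 3*g \<and> (y = sc g x \<or> x = sc g y)"
proof -
  obtain i where i: "i < 3*g" "{x, y} = {i, sc g i}" using assms(2) unfolding GE_def by auto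
  then show ?thesis using sc_lt[OF that i(1)] by (auto simp: doubleton_eq_iff)
qed

lemma cycle_ge:
  assumes g: "g \<ge> 3" and c: "has_cycle_len (GV g) (GE g) k"
  shows "g \<le> k"
proof -
  obtain vs where k3: "k \<ge> 3" and len: "length vs = k" and dist: "distinct vs"
    and sub: "set vs \<subseteq> GV g" and adj: "\<forall>i<k. {vs ! i, vs ! ((i + 1) mod k)} \<in> GE g"
    using c unfolding has_cycle_len_def by auto
  have inV: "i < k \<Longrightarrow> vs ! i < 3*g" for i using sub len unfolding GV_def
    by (metis lessThan_iff nth_mem subsetD)
  define fw where "fw i \<longleftrightarrow> vs ! ((i + 1) mod k) = sc g (vs ! i)" for i
  define bw where "bw i \<longleftrightarrow> vs ! i = sc g (vs ! ((i + 1) mod k))" for i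
  have fb: "i < k \<Longrightarrow> fw i \<or> bw i" for i
    using GE_adj[OF g adj[rule_format, of i]] unfolding fw_def bw_def by auto
  have modk: "(i + 1) mod k = Suc i" if "Suc i < k" for i using that by simp
  have ne2: "vs ! i \<noteq> vs ! ((Suc i + 1) mod k)" if "Suc i < k" for i
  proof
    assume "vs ! i = vs ! ((Suc i + 1) mod k)"
    moreover have "(Suc i + 1) mod k < k" using k3 by simp
    ultimately have "i = (Suc i + 1) mod k" using dist len that nth_eq_iff_index_eq by fastforce
    then show False using that k3
      by (cases "Suc (Suc i) < k") (auto simp: mod_if split: if_splits)
  qed
  have no1: False if "Suc i < k" "fw i" "bw (Suc i)" for i
  proof -
    have "sc g (vs ! i) = sc g (vs ! ((Suc i + 1) mod k))"
      using that unfolding fw_def bw_def modk[OF that(1)] by simp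
    then have "vs ! i = vs ! ((Suc i + 1) mod k)"
      using sc_inj[OF g] inV that(1) k3 by (metis Suc_lessD mod_less_divisor not_numeral_le_zero gr0I)
    then show False using ne2[OF that(1)] by simp
  qed
  have no2: False if "Suc i < k" "bw i" "fw (Suc i)" for i
  proof -
    have "vs ! i = vs ! ((Suc i + 1) mod k)"
      using that unfolding fw_def bw_def modk[OF that(1)] by simp
    then show False using ne2[OF that(1)] by simp
  qed
  have k0: "0 < k" using k3 by simp
  have closed: "(sc g ^^ k) (vs ! 0) = vs ! 0"
  proof (cases "fw 0")
    case True
    have allfw: "i < k \<Longrightarrow> fw i" for i
    proof (induction i)
      case 0 then show ?case using True by simp
    next
      case (Suc i) then show ?case using fb[of "Suc i"] no1[of i] by auto
    qed
    have pw: "i < k \<Longrightarrow> (sc g ^^ i) (vs ! 0) = vs ! i" for i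
    proof (induction i)
      case 0 then show ?case by simp
    next
      case (Suc i)
      then have "vs ! Suc i = sc g (vs ! i)" using allfw[of i] modk[of i] unfolding fw_def by simp
      then show ?case using Suc by simp
    qed
    have "vs ! 0 = sc g (vs ! (k - 1))" using allfw[of "k - 1"] k0 unfolding fw_def by simp
    also have "\<dots> = sc g ((sc g ^^ (k - 1)) (vs ! 0))" using pw[of "k - 1"] k0 by simp
    also have "\<dots> = (sc g ^^ k) (vs ! 0)" using k0
      by (metis Suc_diff_1 funpow.simps(2) o_apply)
    finally show ?thesis by simp
  next
    case False
    then have b0: "bw 0" using fb k0 by auto
    have allbw: "i < k \<Longrightarrow> bw i" for i
    proof (induction i)
      case 0 then show ?case using b0 by simp
    next
      case (Suc i) then show ?case using fb[of "Suc i"] no2[of i] by auto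
    qed
    have pw: "i < k \<Longrightarrow> vs ! 0 = (sc g ^^ i) (vs ! i)" for i
    proof (induction i)
      case 0 then show ?case by simp
    next
      case (Suc i)
      then have "vs ! i = sc g (vs ! Suc i)" using allbw[of i] modk[of i] unfolding bw_def by simp
      then show ?case using Suc by (simp add: funpow_swap1)
    qed
    have "vs ! (k - 1) = sc g (vs ! 0)" using allbw[of "k - 1"] k0 unfolding bw_def by simp
    then have "vs ! 0 = (sc g ^^ (k - 1)) (sc g (vs ! 0))" using pw[of "k - 1"] k0 by simp
    also have "\<dots> = (sc g ^^ k) (vs ! 0)" using k0
      by (metis Suc_diff_1 funpow_Suc_right o_apply)
    finally show ?thesis by simp
  qed
  show ?thesis
  proof (rule ccontr)
    assume "\<not> g \<le> k"
    then show False using sc_pow_ne[OF g inV[OF k0] k0] closed by simp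
  qed
qed

lemma cycle_g: assumes g: "g \<ge> 3" shows "has_cycle_len (GV g) (GE g) g"
  unfolding has_cycle_len_def
proof (intro conjI exI[of _ "[2*g..<3*g]"])
  show "\<forall>i<g. {[2*g..<3*g] ! i, [2*g..<3*g] ! ((i + 1) mod g)} \<in> GE g"
  proof (intro allI impI)
    fix i assume i: "i < g"
    have "(i + 1) mod g < g" using i by simp
    then have e: "[2*g..<3*g] ! ((i + 1) mod g) = 2*g + (i + 1) mod g" "[2*g..<3*g] ! i = 2*g + i"
      using i by auto
    have "sc g (2*g + i) = 2*g + (i + 1) mod g" unfolding sc_def by simp
    then show "{[2*g..<3*g] ! i, [2*g..<3*g] ! ((i + 1) mod g)} \<in> GE g"
      unfolding e GE_def using i by (auto intro!: exI[of _ "2*g + i"])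
  qed
qed (use g in \<open>auto simp: GV_def\<close>)

lemma girth_G: assumes g: "g \<ge> 3" shows "girth (GV g) (GE g) = enat g"
  unfolding girth_def
proof (rule antisym)
  show "(INF k\<in>{k. has_cycle_len (GV g) (GE g) k}. enat k) \<le> enat g"
    using cycle_g[OF g] by (intro INF_lower2[of g]) auto
  show "enat g \<le> (INF k\<in>{k. has_cycle_len (GV g) (GE g) k}. enat k)"
    using cycle_ge[OF g] by (intro INF_greatest) auto
qed

lemma simple_G: assumes g: "g \<ge> 3" shows "simple_graph (GV g) (GE g)"
  unfolding simple_graph_def GV_def GE_def
  using sc_ne[OF g] sc_lt[OF g] by fastforce



definition enc :: "nat \<Rightarrow> nat \<Rightarrow> nat" where "enc u c = prod_encode (u, c)"
definition tau :: "nat \<Rightarrow> nat \<Rightarrow> nat \<Rightarrow> nat \<Rightarrow> nat" where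
  "tau g m i c = (if i = 2*g - 1 then Suc c mod m else c)"
definition CL :: "nat \<Rightarrow> nat \<Rightarrow> nat set" where "CL m u = enc u ` {..<m}"
definition CVH :: "nat \<Rightarrow> nat \<Rightarrow> nat set" where "CVH g m = (\<Union>u\<in>GV g. CL m u)"
definition CEH :: "nat \<Rightarrow> nat \<Rightarrow> nat set set" where
  "CEH g m = {{enc u c, enc u c'} | u c c'. u < 3*g \<and> c < m \<and> c' < m \<and> c \<noteq> c'}
     \<union> {{enc i c, enc (sc g i) (tau g m i c)} | i c. i < 3*g \<and> c < m}"

lemma enc_eq[simp]: "enc u c = enc v d \<longleftrightarrow> u = v \<and> c = d"
  unfolding enc_def by simp

lemma tau_lt: "0 < m \<Longrightarrow> c < m \<Longrightarrow> tau g m i c < m"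
  unfolding tau_def by auto

lemma tau_inj: "c < m \<Longrightarrow> d < m \<Longrightarrow> tau g m i c = tau g m i d \<Longrightarrow> c = d"
  unfolding tau_def by (auto simp: mod_if split: if_splits)

lemma adjH:
  assumes g: "g \<ge> 3" and uv: "u < 3*g" "v < 3*g" and cd: "c < m" "d < m"
  shows "{enc u c, enc v d} \<in> CEH g m \<longleftrightarrow>
    (u = v \<and> c \<noteq> d) \<or> (v = sc g u \<and> d = tau g m u c) \<or> (u = sc g v \<and> c = tau g m v d)"
proof
  assume "{enc u c, enc v d} \<in> CEH g m"
  then show "(u = v \<and> c \<noteq> d) \<or> (v = sc g u \<and> d = tau g m u c) \<or> (u = sc g v \<and> c = tau g m v d)"
  proof (cases "{enc u c, enc v d} \<in> {{enc u c, enc u c'} | u c c'. u < 3*g \<and> c < m \<and> c' < m \<and> c \<noteq> c'}")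
    case True
    then obtain w c1 c2 where "{enc u c, enc v d} = {enc w c1, enc w c2}" "c1 \<noteq> c2" by blast
    then show ?thesis unfolding doubleton_eq_iff enc_eq by blast
  next
    case False
    then have "{enc u c, enc v d} \<in> {{enc i c, enc (sc g i) (tau g m i c)} | i c. i < 3*g \<and> c < m}"
      using \<open>{enc u c, enc v d} \<in> CEH g m\<close> unfolding CEH_def by blast
    then obtain i c1 where "{enc u c, enc v d} = {enc i c1, enc (sc g i) (tau g m i c1)}" by blast
    then show ?thesis unfolding doubleton_eq_iff enc_eq by auto
  qed
next
  assume "(u = v \<and> c \<noteq> d) \<or> (v = sc g u \<and> d = tau g m u c) \<or> (u = sc g v \<and> c = tau g m v d)"
  then consider "u = v \<and> c \<noteq> d" | "v = sc g u \<and> d = tau g m u c" | "u = sc g v \<and> c = tau g m v d" by blast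
  then show "{enc u c, enc v d} \<in> CEH g m"
  proof cases
    case 1 then show ?thesis using uv cd unfolding CEH_def by blast
  next
    case 2 then show ?thesis using uv cd unfolding CEH_def by blast
  next
    case 3
    then have "{enc u c, enc v d} = {enc v d, enc (sc g v) (tau g m v d)}" by auto
    then show ?thesis using uv cd unfolding CEH_def by blast
  qed
qed

lemma CVH_iff: "x \<in> CVH g m \<longleftrightarrow> (\<exists>u c. u < 3*g \<and> c < m \<and> x = enc u c)"
  unfolding CVH_def CL_def GV_def by auto

lemma CEH_sub: "e \<in> CEH g m \<Longrightarrow> g \<ge> 3 \<Longrightarrow> 0 < m \<Longrightarrow> \<exists>x y. e = {x, y} \<and> x \<noteq> y \<and> x \<in> CVH g m \<and> y \<in> CVH g m"
proof -
  assume e: "e \<in> CEH g m" and g: "g \<ge> 3" and m: "0 < m"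
  show ?thesis
  proof (cases "e \<in> {{enc u c, enc u c'} | u c c'. u < 3*g \<and> c < m \<and> c' < m \<and> c \<noteq> c'}")
    case True
    then obtain w c1 c2 where "e = {enc w c1, enc w c2}" "c1 \<noteq> c2" "w < 3*g" "c1 < m" "c2 < m" by blast
    then show ?thesis unfolding CVH_iff by (intro exI[of _ "enc w c1"] exI[of _ "enc w c2"]) auto
  next
    case False
    then have "e \<in> {{enc i c, enc (sc g i) (tau g m i c)} | i c. i < 3*g \<and> c < m}"
      using e unfolding CEH_def by blast
    then obtain i c1 where "e = {enc i c1, enc (sc g i) (tau g m i c1)}" "i < 3*g" "c1 < m" by blast
    moreover have "sc g i \<noteq> i" "sc g i < 3*g" "tau g m i c1 < m"
      using sc_ne[OF g] sc_lt[OF g] tau_lt[OF m] calculation by auto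
    ultimately show ?thesis unfolding CVH_iff
      by (intro exI[of _ "enc i c1"] exI[of _ "enc (sc g i) (tau g m i c1)"]) auto
  qed
qed

lemma matching:
  assumes g: "g \<ge> 3" and m: "0 < m" and e: "{u, v} \<in> GE g"
    and x: "x \<in> CL m u" and y: "y \<in> CL m v" and y': "y' \<in> CL m v"
    and h: "{x, y} \<in> CEH g m" "{x, y'} \<in> CEH g m"
  shows "y = y'"
proof -
  have uv: "u < 3*g" "v < 3*g" "v = sc g u \<or> u = sc g v" using GE_adj[OF g e] by auto
  have "u \<noteq> v" using uv sc_ne[OF g uv(1)] sc_ne[OF g uv(2)] by metis
  obtain c d d' where c: "c < m" "x = enc u c" and d: "d < m" "y = enc v d" and d': "d' < m" "y' = enc v d'"
    using x y y' unfolding CL_def by auto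
  note A = adjH[OF g uv(1,2) c(1) d(1)] adjH[OF g uv(1,2) c(1) d'(1)]
  from uv(3) show ?thesis
  proof
    assume vs: "v = sc g u"
    then have "u \<noteq> sc g v" using sc_sc_ne[OF g uv(1)] by auto
    then show ?thesis using A h \<open>u \<noteq> v\<close> c d d' vs by auto
  next
    assume us: "u = sc g v"
    then have "v \<noteq> sc g u" using sc_sc_ne[OF g uv(2)] by auto
    then have "c = tau g m v d" "c = tau g m v d'" using A h \<open>u \<noteq> v\<close> c d d' us by auto
    then show ?thesis using tau_inj d d' by metis
  qed
qed

lemma GE_sym: "{u, v} \<in> GE g \<Longrightarrow> {v, u} \<in> GE g" by (simp add: insert_commute)

lemma is_cover_C: assumes g: "g \<ge> 3" and m: "0 < m"
  shows "is_mfold_cover (GV g) (GE g) m (CL m) (CVH g m) (CEH g m)"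
  unfolding is_mfold_cover_def is_cover_def
proof (intro conjI)
  show "simple_graph (CVH g m) (CEH g m)"
    unfolding simple_graph_def
  proof
    show "finite (CVH g m)" unfolding CVH_def CL_def GV_def by auto
  qed (use CEH_sub[OF _ g m] in blast)
  show "(\<Union>u\<in>GV g. CL m u) = CVH g m" unfolding CVH_def ..
  show "\<forall>u\<in>GV g. \<forall>v\<in>GV g. u \<noteq> v \<longrightarrow> CL m u \<inter> CL m v = {}" unfolding CL_def by auto
  show "\<forall>u\<in>GV g. \<forall>x\<in>CL m u. \<forall>y\<in>CL m u. x \<noteq> y \<longrightarrow> {x, y} \<in> CEH g m"
    unfolding CL_def GV_def using adjH[OF g] by auto
  show "\<forall>u\<in>GV g. \<forall>v\<in>GV g. \<forall>x\<in>CL m u. \<forall>y\<in>CL m v. {x, y} \<in> CEH g m \<longrightarrow> u = v \<or> {u, v} \<in> GE g"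
  proof (intro ballI impI)
    fix u v x y assume u: "u \<in> GV g" and v: "v \<in> GV g" and x: "x \<in> CL m u" and y: "y \<in> CL m v"
      and h: "{x, y} \<in> CEH g m"
    obtain c d where c: "c < m" "x = enc u c" and d: "d < m" "y = enc v d"
      using x y unfolding CL_def by auto
    have uv: "u < 3*g" "v < 3*g" using u v unfolding GV_def by auto
    have "(u = v \<and> c \<noteq> d) \<or> (v = sc g u \<and> d = tau g m u c) \<or> (u = sc g v \<and> c = tau g m v d)"
      using adjH[OF g uv c(1) d(1)] h c d by simp
    then show "u = v \<or> {u, v} \<in> GE g"
      unfolding GE_def using uv by (auto simp: insert_commute)
  qed
  show "\<forall>u v. {u, v} \<in> GE g \<longrightarrow>
        (\<forall>x\<in>CL m u. \<forall>y\<in>CL m v. \<forall>y'\<in>CL m v. {x, y} \<in> CEH g m \<and> {x, y'} \<in> CEH g m \<longrightarrow> y = y') \<and>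
        (\<forall>y\<in>CL m v. \<forall>x\<in>CL m u. \<forall>x'\<in>CL m u. {x, y} \<in> CEH g m \<and> {x', y} \<in> CEH g m \<longrightarrow> x = x')"
  proof (intro allI impI conjI ballI)
    fix u v x y y' assume "{u, v} \<in> GE g" "x \<in> CL m u" "y \<in> CL m v" "y' \<in> CL m v"
      "{x, y} \<in> CEH g m \<and> {x, y'} \<in> CEH g m"
    then show "y = y'" using matching[OF g m] by blast
  next
    fix u v x y x' assume "{u, v} \<in> GE g" "y \<in> CL m v" "x \<in> CL m u" "x' \<in> CL m u"
      "{x, y} \<in> CEH g m \<and> {x', y} \<in> CEH g m"
    then show "x = x'" using matching[OF g m, of v u y x x'] GE_sym by (auto simp: insert_commute)
  qed
  show "\<forall>u\<in>GV g. card (CL m u) = m"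
    unfolding CL_def by (auto simp: card_image inj_on_def)
qed



lemma card_split:
  assumes AB: "A \<inter> B = {}"
  shows "card {f \<in> (A \<union> B) \<rightarrow>\<^sub>E C. P (restrict f A) \<and> Q (restrict f B)}
       = card {h \<in> A \<rightarrow>\<^sub>E C. P h} * card {h \<in> B \<rightarrow>\<^sub>E C. Q h}"
proof -
  let ?L = "{f \<in> (A \<union> B) \<rightarrow>\<^sub>E C. P (restrict f A) \<and> Q (restrict f B)}"
  let ?R = "{h \<in> A \<rightarrow>\<^sub>E C. P h} \<times> {h \<in> B \<rightarrow>\<^sub>E C. Q h}"
  have "bij_betw (\<lambda>f. (restrict f A, restrict f B)) ?L ?R"
  proof (rule bij_betwI[where g = "\<lambda>(h, k). \<lambda>x. if x \<in> A then h x else k x"])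
    show "(\<lambda>f. (restrict f A, restrict f B)) \<in> ?L \<rightarrow> ?R" by (auto simp: PiE_iff)
    show "(\<lambda>(h, k). \<lambda>x. if x \<in> A then h x else k x) \<in> ?R \<rightarrow> ?L"
    proof
      fix p assume p: "p \<in> ?R"
      obtain h k where hk: "p = (h, k)" by fastforce
      have h: "h \<in> A \<rightarrow>\<^sub>E C" "P h" and k: "k \<in> B \<rightarrow>\<^sub>E C" "Q k" using p hk by auto
      have r1: "restrict (\<lambda>x. if x \<in> A then h x else k x) A = h"
        using h(1) by (auto simp: restrict_def PiE_iff extensional_def)
      have r2: "restrict (\<lambda>x. if x \<in> A then h x else k x) B = k"
        using k(1) AB by (auto simp: restrict_def PiE_iff extensional_def fun_eq_iff)
      have "(\<lambda>x. if x \<in> A then h x else k x) \<in> (A \<union> B) \<rightarrow>\<^sub>E C"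
        using h(1) k(1) by (auto simp: PiE_iff extensional_def)
      then show "(case p of (h, k) \<Rightarrow> \<lambda>x. if x \<in> A then h x else k x) \<in> ?L"
        using r1 r2 h k hk by auto
    qed
    show "(case (restrict f A, restrict f B) of (h, k) \<Rightarrow> \<lambda>x. if x \<in> A then h x else k x) = f"
      if "f \<in> ?L" for f
      using that by (auto simp: PiE_iff extensional_def restrict_def fun_eq_iff)
    show "(restrict (case p of (h, k) \<Rightarrow> \<lambda>x. if x \<in> A then h x else k x) A,
           restrict (case p of (h, k) \<Rightarrow> \<lambda>x. if x \<in> A then h x else k x) B) = p"
      if "p \<in> ?R" for p
      using that AB by (auto simp: PiE_iff extensional_def restrict_def fun_eq_iff)
  qed
  then have "card ?L = card ?R" by (rule bij_betw_same_card)
  then show ?thesis by (simp add: card_cartesian_product)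
qed

lemma all_split: "(b::nat) \<le> c \<Longrightarrow> (\<forall>i<c. P i) \<longleftrightarrow> (\<forall>i<b. P i) \<and> (\<forall>i\<in>{b..<c}. P i)"
  by (metis atLeastLessThan_iff less_le_trans not_less)

lemma all_last: "0 < (n::nat) \<Longrightarrow> (\<forall>i<n. P i) \<longleftrightarrow> (\<forall>i<n - 1. P i) \<and> P (n - 1)"
  by (metis One_nat_def Suc_pred less_Suc_eq)

definition ColSet :: "nat \<Rightarrow> nat \<Rightarrow> (nat \<Rightarrow> nat \<Rightarrow> nat \<Rightarrow> bool) \<Rightarrow> (nat \<Rightarrow> nat) set" where
  "ColSet g m R = {f \<in> GV g \<rightarrow>\<^sub>E {..<m}. \<forall>i<3*g. R i (f i) (f (sc g i))}"

lemma ColSet_split: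
  assumes g: "g \<ge> 3"
  shows "card (ColSet g m R) =
    card {h \<in> {..<2*g} \<rightarrow>\<^sub>E {..<m}. \<forall>i<2*g. R i (h i) (h (sc g i))} *
    card {h \<in> {2*g..<3*g} \<rightarrow>\<^sub>E {..<m}. \<forall>i\<in>{2*g..<3*g}. R i (h i) (h (sc g i))}"
proof -
  have V: "GV g = {..<2*g} \<union> {2*g..<3*g}" unfolding GV_def by auto
  have "ColSet g m R = {f \<in> ({..<2*g} \<union> {2*g..<3*g}) \<rightarrow>\<^sub>E {..<m}.
      (\<lambda>h. \<forall>i<2*g. R i (h i) (h (sc g i))) (restrict f {..<2*g}) \<and>
      (\<lambda>h. \<forall>i\<in>{2*g..<3*g}. R i (h i) (h (sc g i))) (restrict f {2*g..<3*g})}"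
    unfolding ColSet_def V
  proof (intro Collect_cong conj_cong refl)
    fix f
    have "(\<forall>i<3*g. R i (f i) (f (sc g i))) \<longleftrightarrow>
          (\<forall>i<2*g. R i (f i) (f (sc g i))) \<and> (\<forall>i\<in>{2*g..<3*g}. R i (f i) (f (sc g i)))"
      by (rule all_split) simp
    also have "\<dots> \<longleftrightarrow> (\<forall>i<2*g. R i (restrict f {..<2*g} i) (restrict f {..<2*g} (sc g i))) \<and>
          (\<forall>i\<in>{2*g..<3*g}. R i (restrict f {2*g..<3*g} i) (restrict f {2*g..<3*g} (sc g i)))"
    proof (intro conj_cong)
      show "(\<forall>i<2*g. R i (f i) (f (sc g i))) \<longleftrightarrow> (\<forall>i<2*g. R i (restrict f {..<2*g} i) (restrict f {..<2*g} (sc g i)))"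
        using sc_low[of _ g] by simp
      show "(\<forall>i\<in>{2*g..<3*g}. R i (f i) (f (sc g i))) \<longleftrightarrow> (\<forall>i\<in>{2*g..<3*g}. R i (restrict f {2*g..<3*g} i) (restrict f {2*g..<3*g} (sc g i)))"
        using sc_high[OF g] by simp
    qed
    finally show "(\<forall>i<3*g. R i (f i) (f (sc g i))) \<longleftrightarrow>
      (\<lambda>h. \<forall>i<2*g. R i (h i) (h (sc g i))) (restrict f {..<2*g}) \<and>
      (\<lambda>h. \<forall>i\<in>{2*g..<3*g}. R i (h i) (h (sc g i))) (restrict f {2*g..<3*g})" by simp
  qed
  then show ?thesis
    using card_split[where A = "{..<2*g}" and B = "{2*g..<3*g}" and C = "{..<m}"
       and P = "\<lambda>h. \<forall>i<2*g. R i (h i) (h (sc g i))" and Q = "\<lambda>h. \<forall>i\<in>{2*g..<3*g}. R i (h i) (h (sc g i))"]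
    by (simp only: ivl_disj_int(16)[of 0 "2*g"] lessThan_atLeast0) simp
qed

lemma low_Cyc:
  assumes g: "g \<ge> 3"
    and R: "\<And>i a b. i < 2*g - 1 \<Longrightarrow> R i a b \<longleftrightarrow> a \<noteq> b"
    and Q: "\<And>a b. R (2*g - 1) b a \<longleftrightarrow> Q a b"
  shows "{h \<in> {..<2*g} \<rightarrow>\<^sub>E {..<m}. \<forall>i<2*g. R i (h i) (h (sc g i))} = Cyc m (2*g - 1) Q"
proof -
  have e: "{..<Suc (2*g - 1)} = {..<2*g}" using g by auto
  have s1: "i < 2*g - 1 \<Longrightarrow> sc g i = Suc i" for i unfolding sc_def by auto
  have s2: "sc g (2*g - 1) = 0" unfolding sc_def using g by auto
  show ?thesis unfolding Cyc_def e
  proof (intro Collect_cong conj_cong refl)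
    fix h
    have "(\<forall>i<2*g. R i (h i) (h (sc g i))) \<longleftrightarrow>
          (\<forall>i<2*g - 1. R i (h i) (h (sc g i))) \<and> R (2*g - 1) (h (2*g - 1)) (h (sc g (2*g - 1)))"
      using g by (intro all_last) simp
    also have "\<dots> \<longleftrightarrow> (\<forall>i<2*g - 1. h i \<noteq> h (Suc i)) \<and> Q (h 0) (h (2*g - 1))"
      using R Q s1 s2 by auto
    finally show "(\<forall>i<2*g. R i (h i) (h (sc g i))) \<longleftrightarrow> (\<forall>i<2*g - 1. h i \<noteq> h (Suc i)) \<and> Q (h 0) (h (2*g - 1))" .
  qed
qed

lemma proper_eq: assumes g: "g \<ge> 3"
  shows "{f \<in> GV g \<rightarrow>\<^sub>E {..<m}. \<forall>u v. {u, v} \<in> GE g \<longrightarrow> f u \<noteq> f v} = ColSet g m (\<lambda>i a b. a \<noteq> b)"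
  unfolding ColSet_def
proof (intro Collect_cong conj_cong refl iffI allI impI)
  fix f i assume "\<forall>u v. {u, v} \<in> GE g \<longrightarrow> f u \<noteq> f v" "i < 3*g"
  then show "f i \<noteq> f (sc g i)" unfolding GE_def by blast
next
  fix f u v assume h: "\<forall>i<3*g. f i \<noteq> f (sc g i)" and e: "{u, v} \<in> GE g"
  have "u < 3*g" "v < 3*g" "v = sc g u \<or> u = sc g v" using GE_adj[OF g e] by auto
  then show "f u \<noteq> f v" using h by auto
qed

lemma high_eq: assumes g: "g \<ge> 3"
  shows "{h \<in> {2*g..<3*g} \<rightarrow>\<^sub>E {..<m}. \<forall>i\<in>{2*g..<3*g}. h (sc g i) \<noteq> tau g m i (h i)}
       = {h \<in> {2*g..<3*g} \<rightarrow>\<^sub>E {..<m}. \<forall>i\<in>{2*g..<3*g}. h i \<noteq> h (sc g i)}"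
proof (intro Collect_cong conj_cong refl ball_cong)
  fix h i assume "i \<in> {2*g..<3*g}"
  then have "tau g m i c = c" for c unfolding tau_def using g by auto
  then show "(h (sc g i) \<noteq> tau g m i (h i)) = (h i \<noteq> h (sc g i))" by auto
qed

lemma high_pos: fixes m :: nat assumes g: "g \<ge> 3" and m: "m \<ge> 3"
  shows "0 < card {h \<in> {2*g..<3*g} \<rightarrow>\<^sub>E {..<m}. \<forall>i\<in>{2*g..<3*g}. h i \<noteq> h (sc g i)}"
proof -
  define h0 where "h0 = restrict (\<lambda>i::nat. if i = 3*g - 1 then (2::nat) else (i - 2*g) mod 2) {2*g..<3*g}"
  have "h0 \<in> {h \<in> {2*g..<3*g} \<rightarrow>\<^sub>E {..<m}. \<forall>i\<in>{2*g..<3*g}. h i \<noteq> h (sc g i)}"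
  proof (intro CollectI conjI ballI)
    show "h0 \<in> {2*g..<3*g} \<rightarrow>\<^sub>E {..<m}" unfolding h0_def using m by auto
    fix i assume i: "i \<in> {2*g..<3*g}"
    show "h0 i \<noteq> h0 (sc g i)"
    proof (cases "i = 3*g - 1")
      case True
      then have "sc g i = 2*g" unfolding sc_def using g by auto
      then show ?thesis unfolding h0_def using True i g by auto
    next
      case False
      then have s: "sc g i = Suc i" unfolding sc_def using g i by auto
      show ?thesis
      proof (cases "Suc i = 3*g - 1")
        case True then show ?thesis unfolding h0_def s using i g by auto
      next
        case F2: False
        have "Suc i - 2*g = Suc (i - 2*g)" using i by auto
        then show ?thesis unfolding h0_def s using i g F2 False by (auto simp: mod_Suc)
      qed
    qed
  qed
  moreover have "finite {h \<in> {2*g..<3*g} \<rightarrow>\<^sub>E {..<m}. \<forall>i\<in>{2*g..<3*g}. h i \<noteq> h (sc g i)}"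
    by (rule finite_subset[of _ "{2*g..<3*g} \<rightarrow>\<^sub>E {..<m}"]) (auto intro!: finite_PiE)
  ultimately show ?thesis by (auto simp: card_gt_0_iff)
qed

lemma tw_eq: "tw m = (\<lambda>a b. a \<noteq> Suc b mod m)" by (auto simp: tw_def fun_eq_iff)

lemma count_compare: assumes g: "g \<ge> 3" and m: "m \<ge> 3"
  shows "card (ColSet g m (\<lambda>i a b. b \<noteq> tau g m i a)) < card (ColSet g m (\<lambda>i a b. a \<noteq> b))"
proof -
  define cA where "cA = card {h \<in> {2*g..<3*g} \<rightarrow>\<^sub>E {..<m}. \<forall>i\<in>{2*g..<3*g}. h i \<noteq> h (sc g i)}"
  have cA: "0 < cA" unfolding cA_def using high_pos[OF g m] .
  have 1: "card (ColSet g m (\<lambda>i a b. b \<noteq> tau g m i a)) = card (Cyc m (2*g - 1) (tw m)) * cA"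
    unfolding ColSet_split[OF g] cA_def high_eq[OF g]
    by (subst low_Cyc[OF g]) (auto simp: tau_def tw_eq)
  have 2: "card (ColSet g m (\<lambda>i a b. a \<noteq> b)) = card (Cyc m (2*g - 1) (\<lambda>a b. a \<noteq> b)) * cA"
    unfolding ColSet_split[OF g] cA_def
    by (subst low_Cyc[OF g, where Q="\<lambda>a b. a \<noteq> b"]) auto
  have "odd (2*g - 1)" using g by auto
  then have 3: "card (Cyc m (2*g - 1) (\<lambda>a b. a \<noteq> b)) = card (Cyc m (2*g - 1) (tw m)) + m"
    using m by (intro Cyc_compare) auto
  show ?thesis unfolding 1 2 3 using cA m by simp
qed

lemma dp_bound: assumes g: "g \<ge> 3" and m: "0 < m"
  shows "dp_count (GV g) (CVH g m) (CEH g m) \<le> card (ColSet g m (\<lambda>i a b. b \<noteq> tau g m i a))"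
proof -
  let ?T = "ColSet g m (\<lambda>i a b. b \<noteq> tau g m i a)"
  let ?F = "\<lambda>f. (\<lambda>u. enc u (f u)) ` GV g"
  let ?Ind = "{I. I \<subseteq> CVH g m \<and> (\<forall>x\<in>I. \<forall>y\<in>I. {x, y} \<notin> CEH g m) \<and> card I = card (GV g)}"
  have finT: "finite ?T" unfolding ColSet_def
    by (rule finite_subset[of _ "GV g \<rightarrow>\<^sub>E {..<m}"]) (auto intro!: finite_PiE simp: GV_def)
  define p where "p x = fst (prod_decode x)" for x
  define q where "q x = snd (prod_decode x)" for x
  have dec: "x = enc (p x) (q x) \<and> p x < 3*g \<and> q x < m" if xin: "x \<in> CVH g m" for x
  proof -
    obtain u c where "u < 3*g" "c < m" "x = enc u c" using xin unfolding CVH_iff by auto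
    then show ?thesis unfolding p_def q_def enc_def by simp
  qed
  have sub: "?Ind \<subseteq> ?F ` ?T"
  proof
    fix I assume "I \<in> ?Ind"
    then have IH: "I \<subseteq> CVH g m" and ind: "\<forall>x\<in>I. \<forall>y\<in>I. {x, y} \<notin> CEH g m"
      and cI: "card I = card (GV g)" by auto
    have inj: "inj_on p I"
    proof (rule inj_onI)
      fix x y assume x: "x \<in> I" and y: "y \<in> I" and pxy: "p x = p y"
      show "x = y"
      proof (rule ccontr)
        assume "x \<noteq> y"
        have dx: "x = enc (p x) (q x)" "p x < 3*g" "q x < m" using dec IH x by auto
        have dy: "y = enc (p y) (q y)" "p y < 3*g" "q y < m" using dec IH y by auto
        have "q x \<noteq> q y" using dx dy pxy \<open>x \<noteq> y\<close> by metis
        then have "{enc (p x) (q x), enc (p y) (q y)} \<in> CEH g m"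
          using adjH[OF g dx(2) dy(2) dx(3) dy(3)] pxy by simp
        then show False using ind x y dx(1) dy(1) by metis
      qed
    qed
    have fin: "finite (GV g)" unfolding GV_def by simp
    have pI: "p ` I \<subseteq> GV g" using dec IH unfolding GV_def by auto
    have "card (p ` I) = card (GV g)" using card_image[OF inj] cI by simp
    then have pI_eq: "p ` I = GV g" using card_subset_eq[OF fin pI] by simp
    define f where "f = restrict (\<lambda>u. q (the_inv_into I p u)) (GV g)"
    have mem: "enc u (f u) \<in> I \<and> f u < m" if u: "u \<in> GV g" for u
    proof -
      have y: "the_inv_into I p u \<in> I" using the_inv_into_into[OF inj, of u I] u pI_eq by auto
      have py: "p (the_inv_into I p u) = u" using f_the_inv_into_f[OF inj, of u] u pI_eq by auto
      have "the_inv_into I p u = enc u (f u)" "f u < m"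
        using dec[of "the_inv_into I p u"] y py IH u unfolding f_def by auto
      then show ?thesis using y by simp
    qed
    have IF: "I = ?F f"
    proof
      show "?F f \<subseteq> I" using mem by auto
      show "I \<subseteq> ?F f"
      proof
        fix x assume x: "x \<in> I"
        have u: "p x \<in> GV g" using pI x by auto
        have "the_inv_into I p (p x) = x" using the_inv_into_f_f[OF inj x] .
        then have "f (p x) = q x" unfolding f_def using u by simp
        then have "x = enc (p x) (f (p x))" using dec[of x] x IH by auto
        then show "x \<in> ?F f" using u by blast
      qed
    qed
    have fT: "f \<in> ?T"
      unfolding ColSet_def
    proof (intro CollectI conjI allI impI)
      have "f \<in> extensional (GV g)" unfolding f_def by simp
      then show "f \<in> GV g \<rightarrow>\<^sub>E {..<m}" using mem by (auto simp: PiE_iff)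
      fix i assume i: "i < 3*g"
      have si: "sc g i < 3*g" using sc_lt[OF g i] .
      show "f (sc g i) \<noteq> tau g m i (f i)"
      proof
        assume eq: "f (sc g i) = tau g m i (f i)"
        have a: "enc i (f i) \<in> I" "f i < m" using mem[of i] i unfolding GV_def by auto
        have b: "enc (sc g i) (f (sc g i)) \<in> I" "f (sc g i) < m" using mem[of "sc g i"] si unfolding GV_def by auto
        have "{enc i (f i), enc (sc g i) (f (sc g i))} \<in> CEH g m"
          using adjH[OF g i si a(2) b(2)] eq by simp
        then show False using ind a(1) b(1) by blast
      qed
    qed
    show "I \<in> ?F ` ?T" using IF fT by blast
  qed
  have "dp_count (GV g) (CVH g m) (CEH g m) = card ?Ind" unfolding dp_count_def ..
  also have "\<dots> \<le> card (?F ` ?T)" using sub finT by (intro card_mono) auto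
  also have "\<dots> \<le> card ?T" by (rule card_image_le[OF finT])
  finally show ?thesis .
qed

theorem mainTheorem2:
  fixes g :: nat
  assumes "g \<ge> 3"
  shows "\<exists>(V :: nat set) (E :: nat set set) (N :: nat).
           simple_graph V E \<and> girth V E = enat g \<and>
           (\<forall>m\<ge>N. dp_chrom V E m < chrom_poly V E m)"
proof (intro exI conjI allI impI)
  show "simple_graph (GV g) (GE g)" using simple_G[OF assms] .
  show "girth (GV g) (GE g) = enat g" using girth_G[OF assms] .
  fix m :: nat assume m: "3 \<le> m"
  have "dp_chrom (GV g) (GE g) m \<le> dp_count (GV g) (CVH g m) (CEH g m)"
    unfolding dp_chrom_def
    by (rule cInf_lower) (use is_cover_C[OF assms, of m] m in auto)
  also have "\<dots> \<le> card (ColSet g m (\<lambda>i a b. b \<noteq> tau g m i a))" using dp_bound[OF assms, of m] m by simp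
  also have "\<dots> < card (ColSet g m (\<lambda>i a b. a \<noteq> b))" using count_compare[OF assms m] .
  also have "\<dots> = chrom_poly (GV g) (GE g) m" unfolding chrom_poly_def proper_eq[OF assms] ..
  finally show "dp_chrom (GV g) (GE g) m < chrom_poly (GV g) (GE g) m" .
qed


end
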